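(* Suppose $f,g\in\mathcal A_c$. (a) For each $t>0$, $\|f\ast\Theta_t-g\ast\Theta_t\|\le\|f-g\|$. (b) Let $\epsilon>0$. Suppose $u,v:\mathbb R\times(0,\infty)\to\mathbb R$ are such that $u(\cdot,t),v(\cdot,t)\in\mathcal A_c$ for $t>0$, $\|u(\cdot,t)-f\|\to0$ and $\|v(\cdot,t)-g\|\to0$ as $t\to0^+$. If $\|f-g\|<\epsilon$ then for all sufficiently small $t>0$ we have $\|u(\cdot,t)-v(\cdot,t)\|<2\epsilon$.
   Context: Let $\mathcal B_c$ be the set of continuous $F:\mathbb R\to\mathbb R$ such that $\lim_{x\to\pm\infty}F(x)$ exist as real numbers and $\lim_{x\to-\infty}F(x)=0$. Let $\mathcal A_c$ be the set of distributions $f$ on $\mathbb R$ with $f=F'$ (distributional derivative) for some (unique) $F\in\mathcal B_c$, the primitive of $f$. The Alexiewicz norm is $\|f\|=\sup_{x<y}|F(y)-F(x)|$, and the integral is $\int_a^bf=F(b)-F(a)$. For $f\in\mathcal A_c$ and $h$ of bounded variation, $\int_{-\infty}^\infty fh:=F(\infty)h(\infty)-\int_{-\infty}^\infty F\,dh$ (Henstock–Stieltjes), and the convolution is $f\ast h(x)=\int_{-\infty}^\infty f(\xi)h(x-\xi)\,d\xi$ in this sense. The heat kernel is $\Theta_t(x)=(4\pi t)^{-1/2}e^{-x^2/(4t)}$, $t>0$. *)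

theory Defs
  imports "HOL-Analysis.Analysis"
begin

definition Bc :: "(real \<Rightarrow> real) \<Rightarrow> bool" where
  "Bc F \<longleftrightarrow> continuous_on UNIV F \<and> (\<exists>l. (F \<longlongrightarrow> l) at_top) \<and> (F \<longlongrightarrow> 0) at_bot"

text \<open>An element f of A_c is represented by its (unique) primitive F with Bc F;
  its integral over [x,y] is F y - F x.\<close>
definition intg_prim :: "(real \<Rightarrow> real) \<Rightarrow> real \<Rightarrow> real \<Rightarrow> real" where
  "intg_prim F x y = F y - F x"

definition fun_Ac_prim :: "(real \<Rightarrow> real) \<Rightarrow> (real \<Rightarrow> real) \<Rightarrow> bool" where
  "fun_Ac_prim w F \<longleftrightarrow> Bc F \<and> (\<forall>a b. a \<le> b \<longrightarrow> (w has_integral (F b - F a)) {a..b})"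

definition fun_in_Ac :: "(real \<Rightarrow> real) \<Rightarrow> bool" where
  "fun_in_Ac w \<longleftrightarrow> (\<exists>F. fun_Ac_prim w F)"

definition intg_fun :: "(real \<Rightarrow> real) \<Rightarrow> real \<Rightarrow> real \<Rightarrow> real" where
  "intg_fun w x y = integral {x..y} w"

text \<open>Alexiewicz norm, given the interval-integral functional (x,y) |-> int_x^y f.\<close>
definition anorm :: "(real \<Rightarrow> real \<Rightarrow> real) \<Rightarrow> real" where
  "anorm I = (SUP p \<in> {p :: real \<times> real. fst p < snd p}. \<bar>I (fst p) (snd p)\<bar>)"

definition heat :: "real \<Rightarrow> real \<Rightarrow> real" where
  "heat t x = (4 * pi * t) powr (-1/2) * exp (- (x^2) / (4 * t))"

text \<open>Convolution f * Theta_t (x) = F(inf) h(inf) - int F dh with h(xi) = Theta_t(x - xi);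
  since h is smooth with integrable derivative, the Stieltjes integral int F dh
  is written as int F(xi) h'(xi) dxi.\<close>
definition conv_heat :: "(real \<Rightarrow> real) \<Rightarrow> real \<Rightarrow> real \<Rightarrow> real" where
  "conv_heat F t x =
     Lim at_top F * Lim at_top (\<lambda>\<xi>. heat t (x - \<xi>))
     - integral UNIV (\<lambda>\<xi>. F \<xi> * deriv (\<lambda>\<eta>. heat t (x - \<eta>)) \<xi>)"

end

theory Submission imports Defs "HOL-Probability.Distributions" "HOL-Real_Asymp.Real_Asymp"
begin



lemma Bc_bounded:
  assumes "Bc F" obtains B where "\<And>x. \<bar>F x\<bar> \<le> B"
proof -
  from assms obtain l where l: "(F \<longlongrightarrow> l) at_top" and z: "(F \<longlongrightarrow> 0) at_bot"
    and c: "continuous_on UNIV F" by (auto simp: Bc_def)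
  have "eventually (\<lambda>x. dist (F x) l < 1) at_top" using tendstoD[OF l] by simp
  then obtain N where N0: "\<And>x. x \<ge> N \<Longrightarrow> \<bar>F x - l\<bar> < 1"
    by (auto simp: eventually_at_top_linorder dist_real_def)
  have N: "\<And>x. x \<ge> N \<Longrightarrow> \<bar>F x\<bar> \<le> \<bar>l\<bar> + 1"
    using N0 by (smt (verit))
  have "eventually (\<lambda>x. dist (F x) 0 < 1) at_bot" using tendstoD[OF z] by simp
  then obtain M where M0: "\<And>x. x \<le> M \<Longrightarrow> \<bar>F x\<bar> < 1"
    by (auto simp: eventually_at_bot_linorder dist_real_def)
  have M: "\<And>x. x \<le> M \<Longrightarrow> \<bar>F x\<bar> \<le> 1"
    using M0 by (smt (verit))
  have "compact (F ` {M..N})"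
    by (rule compact_continuous_image) (auto intro: continuous_on_subset[OF c])
  then obtain C where C: "\<And>x. x \<in> {M..N} \<Longrightarrow> \<bar>F x\<bar> \<le> C"
    using compact_imp_bounded bounded_real by (metis image_eqI)
  have "\<bar>F x\<bar> \<le> max (\<bar>l\<bar> + 1) (max 1 C)" for x
    using N[of x] M[of x] C[of x] by (cases "x \<ge> N"; cases "x \<le> M"; auto)
  then show ?thesis using that by blast
qed


lemma heat_nd: "t > 0 \<Longrightarrow> heat t x = normal_density 0 (sqrt (2*t)) x"
  unfolding heat_def normal_density_def
  by (simp add: powr_minus_divide powr_half_sqrt real_sqrt_divide field_simps)

lemma heat_eq: "t > 0 \<Longrightarrow> heat t = normal_density 0 (sqrt (2*t))"
  by (rule ext) (rule heat_nd)

definition Kt :: "real \<Rightarrow> real \<Rightarrow> real" where "Kt t s = s / (2*t) * heat t s"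

lemma heat_meas[measurable]: "heat t \<in> borel_measurable borel"
  unfolding heat_def by measurable

lemma Kt_meas[measurable]: "Kt t \<in> borel_measurable borel"
  unfolding Kt_def by measurable

lemma heat_int: "t > 0 \<Longrightarrow> integrable lborel (heat t)"
  using integrable_normal_density[of "sqrt (2*t)" 0] by (simp add: heat_eq)

lemma heat_int1: "t > 0 \<Longrightarrow> (\<integral>x. heat t x \<partial>lborel) = 1"
  using integral_normal_density[of "sqrt (2*t)" 0] by (simp add: heat_eq)

lemma heat_nonneg: "heat t x \<ge> 0"
  unfolding heat_def by simp

lemma Kt_int: "t > 0 \<Longrightarrow> integrable lborel (Kt t)"
proof -
  assume t: "t > 0"
  have "integrable lborel (\<lambda>x. (1/(2*t)) * (normal_density 0 (sqrt (2*t)) x * (x - 0)^1))"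
    using integrable_normal_moment[of "sqrt (2*t)" 0 1] t by (intro integrable_mult_right) auto
  moreover have "(\<lambda>x. (1/(2*t)) * (normal_density 0 (sqrt (2*t)) x * (x - 0)^1)) = Kt t"
    unfolding Kt_def heat_eq[OF t] by (rule ext) simp
  ultimately show ?thesis by simp
qed

lemma heat_deriv: "t > 0 \<Longrightarrow> (heat t has_real_derivative - Kt t s) (at s)"
proof -
  assume t: "t > 0"
  define c where "c = (4 * pi * t) powr (-1/2)"
  define E where "E = exp (- (s * s) / (4 * t))"
  have h: "heat t = (\<lambda>s. c * exp (- (s * s) / (4 * t)))"
    unfolding heat_def c_def by (rule ext) (simp add: power2_eq_square)
  have d1: "((\<lambda>s. s * s) has_real_derivative (1 * s + 1 * s)) (at s)"
    by (rule DERIV_mult[OF DERIV_ident DERIV_ident])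
  have d2: "((\<lambda>s. - (s * s) / (4 * t)) has_real_derivative (- (1 * s + 1 * s) / (4 * t))) (at s)"
    using DERIV_cdivide[OF DERIV_minus[OF d1], of "4 * t"] by simp
  have d3: "((\<lambda>s. exp (- (s * s) / (4 * t))) has_real_derivative (E * (- (1 * s + 1 * s) / (4 * t)))) (at s)"
    unfolding E_def by (rule DERIV_chain2[OF DERIV_exp d2])
  have d4: "((\<lambda>s. c * exp (- (s * s) / (4 * t))) has_real_derivative (c * (E * (- (1 * s + 1 * s) / (4 * t))))) (at s)"
    by (rule DERIV_cmult[OF d3])
  have q: "- (1 * s + 1 * s) / (4 * t) = - (s / (2 * t))" using t by (simp add: field_simps)
  have "c * (E * (- (1 * s + 1 * s) / (4 * t))) = - Kt t s"
    unfolding q Kt_def heat_def c_def E_def by (simp add: power2_eq_square)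
  with d4 show ?thesis unfolding h by simp
qed

lemma heat_deriv2: "t > 0 \<Longrightarrow> deriv (\<lambda>\<eta>. heat t (x - \<eta>)) \<xi> = Kt t (x - \<xi>)"
proof -
  assume t: "t > 0"
  have d: "((\<lambda>\<eta>. x - \<eta>) has_real_derivative (0 - 1)) (at \<xi>)"
    by (rule DERIV_diff[OF DERIV_const DERIV_ident])
  have "((\<lambda>\<eta>. heat t (x - \<eta>)) has_real_derivative (- Kt t (x - \<xi>)) * (0 - 1)) (at \<xi>)"
    by (rule DERIV_chain2[OF heat_deriv[OF t] d])
  then show ?thesis by (simp add: DERIV_imp_deriv)
qed


lemma heat_lim: "t > 0 \<Longrightarrow> ((\<lambda>\<xi>. heat t (x - \<xi>)) \<longlongrightarrow> 0) at_top"
  unfolding heat_def by real_asymp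



definition Pc :: "(real \<Rightarrow> real) \<Rightarrow> real \<Rightarrow> real \<Rightarrow> real" where
  "Pc F t x = (\<integral>s. F (x - s) * heat t s \<partial>lborel)"

lemma Kt_cont: "t > 0 \<Longrightarrow> continuous_on UNIV (Kt t)"
  unfolding Kt_def heat_def by (intro continuous_intros) auto

lemma heat_cont: "t > 0 \<Longrightarrow> continuous_on UNIV (heat t)"
  unfolding heat_def by (intro continuous_intros) auto

lemma bnd_aux: "\<bar>a\<bar> \<le> (B::real) \<Longrightarrow> norm (a * k) \<le> norm (B * \<bar>k\<bar>)"
  using mult_right_mono[of "\<bar>a\<bar>" B "\<bar>k\<bar>"] by (simp add: abs_mult)

context
  fixes F :: "real \<Rightarrow> real" and t :: real
  assumes BcF: "Bc F" and t: "t > 0"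
begin

lemma Fm: "F \<in> borel_measurable borel"
  using BcF by (auto simp: Bc_def intro: borel_measurable_continuous_onI)

lemma Kt_shift_int: "integrable lborel (\<lambda>\<xi>. Kt t (x - \<xi>))"
proof -
  have "integrable lborel (\<lambda>\<xi>. Kt t (x + (-1) * \<xi>))"
    by (rule lborel_integrable_real_affine[OF Kt_int[OF t]]) simp
  then show ?thesis by simp
qed

lemma heat_shift_int: "integrable lborel (\<lambda>\<xi>. heat t (x - \<xi>))"
proof -
  have "integrable lborel (\<lambda>\<xi>. heat t (x + (-1) * \<xi>))"
    by (rule lborel_integrable_real_affine[OF heat_int[OF t]]) simp
  then show ?thesis by simp
qed

lemma conv_int: "integrable lborel (\<lambda>\<xi>. F \<xi> * Kt t (x - \<xi>))"
proof -
  obtain B where B: "\<And>x. \<bar>F x\<bar> \<le> B" using Bc_bounded[OF BcF] by blast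
  have i: "integrable lborel (\<lambda>\<xi>. B * \<bar>Kt t (x - \<xi>)\<bar>)"
    using Kt_shift_int by (intro integrable_mult_right integrable_abs)
  show ?thesis
  proof (rule Bochner_Integration.integrable_bound[OF i])
    note Fm[measurable]
    show "(\<lambda>\<xi>. F \<xi> * Kt t (x - \<xi>)) \<in> borel_measurable lborel" by measurable
    show "AE \<xi> in lborel. norm (F \<xi> * Kt t (x - \<xi>)) \<le> norm (B * \<bar>Kt t (x - \<xi>)\<bar>)"
      using B by (intro AE_I2 bnd_aux)
  qed
qed

lemma Fheat_int: "integrable lborel (\<lambda>\<xi>. F \<xi> * heat t (x - \<xi>))"
proof -
  obtain B where B: "\<And>x. \<bar>F x\<bar> \<le> B" using Bc_bounded[OF BcF] by blast
  have i: "integrable lborel (\<lambda>\<xi>. B * heat t (x - \<xi>))"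
    using heat_shift_int by (intro integrable_mult_right)
  show ?thesis
  proof (rule Bochner_Integration.integrable_bound[OF i])
    note Fm[measurable]
    show "(\<lambda>\<xi>. F \<xi> * heat t (x - \<xi>)) \<in> borel_measurable lborel" by measurable
    show "AE \<xi> in lborel. norm (F \<xi> * heat t (x - \<xi>)) \<le> norm (B * heat t (x - \<xi>))"
      using B bnd_aux[OF B] heat_nonneg by (intro AE_I2) (metis abs_of_nonneg)
  qed
qed

lemma Pc_int: "integrable lborel (\<lambda>s. F (x - s) * heat t s)"
proof -
  have "integrable lborel (\<lambda>s. F (x + (-1) * s) * heat t (x - (x + (-1) * s)))"
    by (rule lborel_integrable_real_affine[OF Fheat_int]) simp
  then show ?thesis by simp
qed

lemma Pc_alt: "Pc F t x = (\<integral>\<xi>. F \<xi> * heat t (x - \<xi>) \<partial>lborel)"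
proof -
  have "(\<integral>\<xi>. F \<xi> * heat t (x - \<xi>) \<partial>lborel) = \<bar>-1\<bar> *\<^sub>R (\<integral>s. F (x + (-1) * s) * heat t (x - (x + (-1) * s)) \<partial>lborel)"
    by (rule lborel_integral_real_affine) simp
  then show ?thesis by (simp add: Pc_def)
qed

lemma conv_eq: "conv_heat F t x = - (\<integral>\<xi>. F \<xi> * Kt t (x - \<xi>) \<partial>lborel)"
proof -
  have L: "Lim at_top (\<lambda>\<xi>. heat t (x - \<xi>)) = 0"
    by (rule tendsto_Lim[OF trivial_limit_at_top_linorder heat_lim[OF t]])
  have "conv_heat F t x = - integral UNIV (\<lambda>\<xi>. F \<xi> * Kt t (x - \<xi>))"
    unfolding conv_heat_def L heat_deriv2[OF t] by simp
  also have "\<dots> = - (\<integral>\<xi>. F \<xi> * Kt t (x - \<xi>) \<partial>lborel)"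
    using integral_lborel[OF conv_int] by simp
  finally show ?thesis .
qed

end


context
  fixes F :: "real \<Rightarrow> real" and t :: real
  assumes BcF: "Bc F" and t: "t > 0"
begin

lemma conv_has_integral:
  assumes ab: "a \<le> b"
  shows "(conv_heat F t has_integral (Pc F t b - Pc F t a)) {a..b}"
proof -
  note Fm[OF BcF t, measurable]
  obtain B where B: "\<And>x. \<bar>F x\<bar> \<le> B" using Bc_bounded[OF BcF] by blast
  define C where "C = (\<integral>s. \<bar>Kt t s\<bar> \<partial>lborel)"
  have Cshift: "(\<integral>\<xi>. \<bar>Kt t (x - \<xi>)\<bar> \<partial>lborel) = C" for x
    using lborel_integral_real_affine[of "-1" "\<lambda>s. \<bar>Kt t s\<bar>" x] by (simp add: C_def)
  define f :: "real \<times> real \<Rightarrow> real" where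
    "f = (\<lambda>(x,\<xi>). indicator {a..b} x * (- (F \<xi> * Kt t (x - \<xi>))))"
  have fm[measurable]: "f \<in> borel_measurable (lborel \<Otimes>\<^sub>M lborel)" unfolding f_def by measurable
  have nf: "norm (f (x,\<xi>)) = indicator {a..b} x * \<bar>F \<xi> * Kt t (x - \<xi>)\<bar>" for x \<xi>
    by (simp add: f_def indicator_def abs_mult)
  have inner: "(\<integral>\<xi>. norm (f (x,\<xi>)) \<partial>lborel) = indicator {a..b} x * (\<integral>\<xi>. \<bar>F \<xi> * Kt t (x - \<xi>)\<bar> \<partial>lborel)" for x
    unfolding nf by simp
  have ib: "(\<integral>\<xi>. \<bar>F \<xi> * Kt t (x - \<xi>)\<bar> \<partial>lborel) \<le> B * C" for x
  proof -
    have "(\<integral>\<xi>. \<bar>F \<xi> * Kt t (x - \<xi>)\<bar> \<partial>lborel) \<le> (\<integral>\<xi>. B * \<bar>Kt t (x - \<xi>)\<bar> \<partial>lborel)"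
    proof (rule integral_mono)
      show "integrable lborel (\<lambda>\<xi>. \<bar>F \<xi> * Kt t (x - \<xi>)\<bar>)"
        using conv_int[OF BcF t] by (rule integrable_abs)
      show "integrable lborel (\<lambda>\<xi>. B * \<bar>Kt t (x - \<xi>)\<bar>)"
        using Kt_shift_int[OF BcF t] by (intro integrable_mult_right integrable_abs)
      show "\<bar>F \<xi> * Kt t (x - \<xi>)\<bar> \<le> B * \<bar>Kt t (x - \<xi>)\<bar>" for \<xi>
        using mult_right_mono[OF B[of \<xi>], of "\<bar>Kt t (x - \<xi>)\<bar>"] by (simp add: abs_mult)
    qed
    also have "\<dots> = B * C" by (simp add: Cshift)
    finally show ?thesis .
  qed
  have i1: "integrable lborel (\<lambda>x. \<integral>\<xi>. norm (f (x,\<xi>)) \<partial>lborel)"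
  proof (rule Bochner_Integration.integrable_bound[of _ "\<lambda>x. indicator {a..b} x * (B*C)"])
    show "integrable lborel (\<lambda>x. indicator {a..b} x * (B*C))"
      using borel_integrable_atLeastAtMost'[of a b "\<lambda>_. B*C"] by (simp add: set_integrable_def)
    show "(\<lambda>x. \<integral>\<xi>. norm (f (x,\<xi>)) \<partial>lborel) \<in> borel_measurable lborel" by measurable
    show "AE x in lborel. norm (\<integral>\<xi>. norm (f (x,\<xi>)) \<partial>lborel) \<le> norm (indicator {a..b} x * (B*C))"
    proof (intro AE_I2)
      fix x
      have "0 \<le> (\<integral>\<xi>. \<bar>F \<xi> * Kt t (x - \<xi>)\<bar> \<partial>lborel)" by simp
      then show "norm (\<integral>\<xi>. norm (f (x,\<xi>)) \<partial>lborel) \<le> norm (indicator {a..b} x * (B*C))"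
        unfolding inner using ib[of x] by (auto simp: indicator_def)
    qed
  qed
  have i2: "AE x in lborel. integrable lborel (\<lambda>\<xi>. f (x,\<xi>))"
    unfolding f_def using conv_int[OF BcF t] by (intro AE_I2) auto
  have fint: "integrable (lborel \<Otimes>\<^sub>M lborel) f"
    by (rule lborel_pair.Fubini_integrable[OF fm i1 i2])
  have g_int: "integrable lborel (\<lambda>x. \<integral>\<xi>. f (x,\<xi>) \<partial>lborel)"
    by (rule lborel_pair.integrable_fst'[OF fint])
  have g_eq: "(\<integral>\<xi>. f (x,\<xi>) \<partial>lborel) = indicator {a..b} x * conv_heat F t x" for x
    by (simp add: f_def conv_eq[OF BcF t])
  have fint': "integrable (lborel \<Otimes>\<^sub>M lborel) (case_prod (\<lambda>x \<xi>. f (x,\<xi>)))"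
    using fint by simp
  have fub: "(\<integral>\<xi>. (\<integral>x. f (x,\<xi>) \<partial>lborel) \<partial>lborel) = (\<integral>x. (\<integral>\<xi>. f (x,\<xi>) \<partial>lborel) \<partial>lborel)"
    by (rule lborel_pair.Fubini_integral[OF fint'])
  have inner2: "(\<integral>x. f (x,\<xi>) \<partial>lborel) = F \<xi> * (heat t (b - \<xi>) - heat t (a - \<xi>))" for \<xi>
  proof -
    have ftc: "((\<lambda>x. - Kt t (x - \<xi>)) has_integral (heat t (b - \<xi>) - heat t (a - \<xi>))) {a..b}"
    proof (rule fundamental_theorem_of_calculus[OF ab, of "\<lambda>x. heat t (x - \<xi>)", simplified])
      fix x
      have "((\<lambda>x. heat t (x - \<xi>)) has_real_derivative (- Kt t (x - \<xi>)) * 1) (at x)"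
        by (rule DERIV_chain2[OF heat_deriv[OF t]]) (auto intro!: derivative_eq_intros)
      then show "((\<lambda>x. heat t (x - \<xi>)) has_vector_derivative - Kt t (x - \<xi>)) (at x within {a..b})"
        by (simp add: has_real_derivative_iff_has_vector_derivative has_vector_derivative_at_within)
    qed
    have si: "set_integrable lborel {a..b} (\<lambda>x. - Kt t (x - \<xi>))"
      by (rule borel_integrable_atLeastAtMost') (use t in \<open>auto simp: Kt_def heat_def intro!: continuous_intros\<close>)
    have "(LINT x:{a..b}|lborel. - Kt t (x - \<xi>)) = heat t (b - \<xi>) - heat t (a - \<xi>)"
      using set_borel_integral_eq_integral(2)[OF si] integral_unique[OF ftc] by simp
    then have e: "(\<integral>x. indicator {a..b} x * (- Kt t (x - \<xi>)) \<partial>lborel) = heat t (b - \<xi>) - heat t (a - \<xi>)"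
      by (simp add: set_lebesgue_integral_def)
    have "(\<integral>x. f (x,\<xi>) \<partial>lborel) = (\<integral>x. F \<xi> * (indicator {a..b} x * (- Kt t (x - \<xi>))) \<partial>lborel)"
      by (rule Bochner_Integration.integral_cong) (auto simp: f_def)
    also have "\<dots> = F \<xi> * (heat t (b - \<xi>) - heat t (a - \<xi>))"
      by (simp only: integral_mult_right_zero e)
    finally show ?thesis .
  qed
  have rhs: "(\<integral>\<xi>. F \<xi> * (heat t (b - \<xi>) - heat t (a - \<xi>)) \<partial>lborel) = Pc F t b - Pc F t a"
  proof -
    have "(\<integral>\<xi>. F \<xi> * (heat t (b - \<xi>) - heat t (a - \<xi>)) \<partial>lborel)
        = (\<integral>\<xi>. F \<xi> * heat t (b - \<xi>) - F \<xi> * heat t (a - \<xi>) \<partial>lborel)"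
      by (simp add: right_diff_distrib)
    also have "\<dots> = (\<integral>\<xi>. F \<xi> * heat t (b - \<xi>) \<partial>lborel) - (\<integral>\<xi>. F \<xi> * heat t (a - \<xi>) \<partial>lborel)"
      by (rule Bochner_Integration.integral_diff[OF Fheat_int[OF BcF t] Fheat_int[OF BcF t]])
    finally show ?thesis by (simp add: Pc_alt[OF BcF t])
  qed
  have I: "(\<integral>x. indicator {a..b} x * conv_heat F t x \<partial>lborel) = Pc F t b - Pc F t a"
  proof -
    have "(\<integral>x. indicator {a..b} x * conv_heat F t x \<partial>lborel) = (\<integral>x. (\<integral>\<xi>. f (x,\<xi>) \<partial>lborel) \<partial>lborel)"
      by (simp only: g_eq)
    also have "\<dots> = (\<integral>\<xi>. (\<integral>x. f (x,\<xi>) \<partial>lborel) \<partial>lborel)" by (rule fub[symmetric])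
    also have "\<dots> = (\<integral>\<xi>. F \<xi> * (heat t (b - \<xi>) - heat t (a - \<xi>)) \<partial>lborel)" by (simp only: inner2)
    finally show ?thesis using rhs by simp
  qed
  have "integrable lborel (\<lambda>x. indicator {a..b} x * conv_heat F t x)"
    using g_int by (simp only: g_eq)
  from has_integral_integral_lborel[OF this] I
  have "((\<lambda>x. indicator {a..b} x * conv_heat F t x) has_integral (Pc F t b - Pc F t a)) UNIV"
    by simp
  moreover have "(\<lambda>x. indicator {a..b} x * conv_heat F t x) = (\<lambda>x. if x \<in> {a..b} then conv_heat F t x else 0)"
    by (auto simp: indicator_def)
  ultimately have "((\<lambda>x. if x \<in> {a..b} then conv_heat F t x else 0) has_integral (Pc F t b - Pc F t a)) UNIV"
    by simp
  then show ?thesis by (simp only: has_integral_restrict_UNIV)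
qed

end


lemma anorm_le: "(\<And>x y. x < y \<Longrightarrow> \<bar>I x y\<bar> \<le> M) \<Longrightarrow> anorm I \<le> M"
  unfolding anorm_def by (rule cSUP_least) (auto intro: exI[of _ "(0::real,1::real)"])

lemma anorm_ge:
  assumes K: "\<And>x y. x < y \<Longrightarrow> \<bar>I x y\<bar> \<le> K" and xy: "x < y"
  shows "\<bar>I x y\<bar> \<le> anorm I"
proof -
  have "bdd_above ((\<lambda>p. \<bar>I (fst p) (snd p)\<bar>) ` {p :: real \<times> real. fst p < snd p})"
    using K by (intro bdd_aboveI2[of _ _ K]) auto
  from cSUP_upper[OF _ this, of "(x,y)"] xy show ?thesis unfolding anorm_def by simp
qed

context
  fixes F :: "real \<Rightarrow> real" and t :: real
  assumes BcF: "Bc F" and t: "t > 0"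
begin

lemma conv_bound: obtains M where "\<And>x. \<bar>conv_heat F t x\<bar> \<le> M" "M \<ge> 0"
proof -
  obtain B where B: "\<And>x. \<bar>F x\<bar> \<le> B" using Bc_bounded[OF BcF] by blast
  define C where "C = (\<integral>s. \<bar>Kt t s\<bar> \<partial>lborel)"
  have Cshift: "(\<integral>\<xi>. \<bar>Kt t (x - \<xi>)\<bar> \<partial>lborel) = C" for x
    using lborel_integral_real_affine[of "-1" "\<lambda>s. \<bar>Kt t s\<bar>" x] by (simp add: C_def)
  have "\<bar>conv_heat F t x\<bar> \<le> B * C" for x
  proof -
    have "\<bar>conv_heat F t x\<bar> = norm (\<integral>\<xi>. F \<xi> * Kt t (x - \<xi>) \<partial>lborel)"
      by (simp add: conv_eq[OF BcF t])
    also have "\<dots> \<le> (\<integral>\<xi>. norm (F \<xi> * Kt t (x - \<xi>)) \<partial>lborel)"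
      by (rule integral_norm_bound)
    also have "\<dots> \<le> (\<integral>\<xi>. B * \<bar>Kt t (x - \<xi>)\<bar> \<partial>lborel)"
    proof (rule integral_mono)
      show "integrable lborel (\<lambda>\<xi>. norm (F \<xi> * Kt t (x - \<xi>)))"
        using conv_int[OF BcF t] by (rule integrable_norm)
      show "integrable lborel (\<lambda>\<xi>. B * \<bar>Kt t (x - \<xi>)\<bar>)"
        using Kt_shift_int[OF BcF t] by (intro integrable_mult_right integrable_abs)
      show "norm (F \<xi> * Kt t (x - \<xi>)) \<le> B * \<bar>Kt t (x - \<xi>)\<bar>" for \<xi>
        using mult_right_mono[OF B[of \<xi>], of "\<bar>Kt t (x - \<xi>)\<bar>"] by (simp add: abs_mult)
    qed
    also have "\<dots> = B * C" by (simp add: Cshift)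
    finally show ?thesis .
  qed
  moreover have "B * C \<ge> 0"
    using B[of 0] by (auto simp: C_def)
  ultimately show ?thesis using that by blast
qed

lemma Pc_lip: obtains M where "M-lipschitz_on UNIV (Pc F t)"
proof -
  obtain M where M: "\<And>x. \<bar>conv_heat F t x\<bar> \<le> M" "M \<ge> 0" using conv_bound by blast
  have le: "\<bar>Pc F t b - Pc F t a\<bar> \<le> M * (b - a)" if "a \<le> b" for a b
    using has_integral_bound[OF M(2), of "conv_heat F t" "Pc F t b - Pc F t a" a b]
      conv_has_integral[OF BcF t that] M(1) that by simp
  have "M-lipschitz_on UNIV (Pc F t)"
  proof (rule lipschitz_onI)
    fix x y :: real
    show "dist (Pc F t x) (Pc F t y) \<le> M * dist x y"
    proof (cases "x \<le> y")
      case True then show ?thesis using le[OF True] by (simp add: dist_real_def abs_minus_commute)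
    next
      case False then show ?thesis using le[of y x] by (simp add: dist_real_def)
    qed
  qed (use M in auto)
  then show ?thesis using that by blast
qed

lemma Pc_Bc: "Bc (Pc F t)"
proof -
  note Fm[OF BcF t, measurable]
  obtain B where B: "\<And>x. \<bar>F x\<bar> \<le> B" using Bc_bounded[OF BcF] by blast
  from BcF obtain l where l: "(F \<longlongrightarrow> l) at_top" and z: "(F \<longlongrightarrow> 0) at_bot"
    by (auto simp: Bc_def)
  obtain M where "M-lipschitz_on UNIV (Pc F t)" using Pc_lip by blast
  then have c: "continuous_on UNIV (Pc F t)" by (rule lipschitz_on_continuous_on)
  have wint: "integrable lborel (\<lambda>s. B * heat t s)"
    using heat_int[OF t] by (intro integrable_mult_right)
  have bnd: "\<forall>\<^sub>F x in at_top. AE s in lborel. norm (F (g x s) * heat t s) \<le> B * heat t s" for g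
    using B heat_nonneg by (intro always_eventually allI AE_I2) (simp add: abs_mult mult_right_mono)
  have top: "(Pc F t \<longlongrightarrow> l) at_top"
  proof -
    have "((\<lambda>x. \<integral>s. F (x - s) * heat t s \<partial>lborel) \<longlongrightarrow> (\<integral>s. l * heat t s \<partial>lborel)) at_top"
    proof (rule integral_dominated_convergence_at_top[OF _ _ wint])
      show "AE s in lborel. ((\<lambda>x. F (x - s) * heat t s) \<longlongrightarrow> l * heat t s) at_top"
      proof (intro AE_I2 tendsto_mult_right)
        fix s :: real
        have "filterlim (\<lambda>x::real. x - s) at_top at_top" by real_asymp
        then show "((\<lambda>x. F (x - s)) \<longlongrightarrow> l) at_top" by (rule filterlim_compose[OF l])
      qed
      show "(\<lambda>s. l * heat t s) \<in> borel_measurable lborel" by measurable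
      show "(\<lambda>s. F (x - s) * heat t s) \<in> borel_measurable lborel" for x by measurable
      show "\<forall>\<^sub>F x in at_top. AE s in lborel. norm (F (x - s) * heat t s) \<le> B * heat t s"
        by (rule bnd)
    qed
    then show ?thesis using heat_int1[OF t] by (simp add: Pc_def[abs_def])
  qed
  have bot: "(Pc F t \<longlongrightarrow> 0) at_bot"
  proof -
    have "((\<lambda>x. \<integral>s. F (- x - s) * heat t s \<partial>lborel) \<longlongrightarrow> (\<integral>s. 0 * heat t s \<partial>lborel)) at_top"
    proof (rule integral_dominated_convergence_at_top[OF _ _ wint])
      show "AE s in lborel. ((\<lambda>x. F (- x - s) * heat t s) \<longlongrightarrow> 0 * heat t s) at_top"
      proof (intro AE_I2 tendsto_mult_right)
        fix s :: real
        have "filterlim (\<lambda>x::real. - x - s) at_bot at_top" by real_asymp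
        then show "((\<lambda>x. F (- x - s)) \<longlongrightarrow> 0) at_top" by (rule filterlim_compose[OF z])
      qed
      show "(\<lambda>s. 0 * heat t s) \<in> borel_measurable lborel" by measurable
      show "(\<lambda>s. F (- x - s) * heat t s) \<in> borel_measurable lborel" for x by measurable
      show "\<forall>\<^sub>F x in at_top. AE s in lborel. norm (F (- x - s) * heat t s) \<le> B * heat t s"
        by (rule bnd)
    qed
    then have "((\<lambda>x. Pc F t (- x)) \<longlongrightarrow> 0) at_top" by (simp add: Pc_def)
    then show ?thesis by (simp add: filterlim_at_bot_mirror)
  qed
  show ?thesis unfolding Bc_def by (intro conjI c bot exI[of _ l] top)
qed

lemma conv_Ac: "fun_Ac_prim (conv_heat F t) (Pc F t)"
  unfolding fun_Ac_prim_def using Pc_Bc conv_has_integral[OF BcF t] by blast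

lemma intg_conv: "x \<le> y \<Longrightarrow> intg_fun (conv_heat F t) x y = Pc F t y - Pc F t x"
  unfolding intg_fun_def using conv_has_integral[OF BcF t] by (simp add: integral_unique)

end



lemma Bc_prim_bound: assumes "Bc F" obtains K where "\<And>x y. \<bar>intg_prim F x y\<bar> \<le> K"
proof -
  obtain B where B: "\<And>x. \<bar>F x\<bar> \<le> B" using Bc_bounded[OF assms] by blast
  have "\<bar>intg_prim F x y\<bar> \<le> 2 * B" for x y
    using B[of x] B[of y] by (simp add: intg_prim_def)
  then show ?thesis using that by blast
qed

lemma Ac_fun_bound: assumes "fun_in_Ac w" obtains K where "\<And>x y. x < y \<Longrightarrow> \<bar>intg_fun w x y\<bar> \<le> K"
proof -
  from assms obtain U where U: "Bc U" "\<And>a b. a \<le> b \<Longrightarrow> (w has_integral (U b - U a)) {a..b}"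
    by (auto simp: fun_in_Ac_def fun_Ac_prim_def)
  obtain B where B: "\<And>x. \<bar>U x\<bar> \<le> B" using Bc_bounded[OF U(1)] by blast
  have "\<bar>intg_fun w x y\<bar> \<le> 2 * B" if "x < y" for x y
    using B[of x] B[of y] integral_unique[OF U(2)[of x y]] that by (simp add: intg_fun_def)
  then show ?thesis using that by blast
qed

lemma partA:
  assumes BcF: "Bc F" and BcG: "Bc G" and t: "t > 0" and xy: "x < y"
  shows "\<bar>intg_fun (conv_heat F t) x y - intg_fun (conv_heat G t) x y\<bar>
           \<le> anorm (\<lambda>x y. intg_prim F x y - intg_prim G x y)"
proof -
  define M where "M = anorm (\<lambda>x y. intg_prim F x y - intg_prim G x y)"
  obtain K1 where K1: "\<And>x y. \<bar>intg_prim F x y\<bar> \<le> K1" using Bc_prim_bound[OF BcF] by blast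
  obtain K2 where K2: "\<And>x y. \<bar>intg_prim G x y\<bar> \<le> K2" using Bc_prim_bound[OF BcG] by blast
  define h where "h s = intg_prim F (x - s) (y - s) - intg_prim G (x - s) (y - s)" for s
  have hM: "\<bar>h s\<bar> \<le> M" for s
    unfolding h_def M_def
  proof (rule anorm_ge)
    show "\<bar>intg_prim F a b - intg_prim G a b\<bar> \<le> K1 + K2" for a b
      using K1[of a b] K2[of a b] by linarith
  qed (use xy in simp)
  have int1: "integrable lborel (\<lambda>s. F (z - s) * heat t s)" for z using Pc_int[OF BcF t] .
  have int2: "integrable lborel (\<lambda>s. G (z - s) * heat t s)" for z using Pc_int[OF BcG t] .
  have e: "intg_fun (conv_heat F t) x y - intg_fun (conv_heat G t) x y
      = (\<integral>s. (F (y - s) * heat t s - F (x - s) * heat t s) - (G (y - s) * heat t s - G (x - s) * heat t s) \<partial>lborel)"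
    using xy int1 int2
    by (simp add: intg_conv[OF BcF t] intg_conv[OF BcG t] Pc_def Bochner_Integration.integral_diff)
  also have "\<dots> = (\<integral>s. h s * heat t s \<partial>lborel)"
    by (rule Bochner_Integration.integral_cong) (auto simp: h_def intg_prim_def algebra_simps)
  finally have e2: "intg_fun (conv_heat F t) x y - intg_fun (conv_heat G t) x y = (\<integral>s. h s * heat t s \<partial>lborel)" .
  have hint: "integrable lborel (\<lambda>s. h s * heat t s)"
  proof -
    have "integrable lborel (\<lambda>s. (F (y - s) * heat t s - F (x - s) * heat t s) - (G (y - s) * heat t s - G (x - s) * heat t s))"
      by (intro Bochner_Integration.integrable_diff int1 int2)
    then show ?thesis
      by (rule Bochner_Integration.integrable_cong[THEN iffD1, rotated 2]) (auto simp: h_def intg_prim_def algebra_simps)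
  qed
  have "norm (\<integral>s. h s * heat t s \<partial>lborel) \<le> (\<integral>s. norm (h s * heat t s) \<partial>lborel)"
    by (rule integral_norm_bound)
  also have "\<dots> \<le> (\<integral>s. M * heat t s \<partial>lborel)"
  proof (rule integral_mono)
    show "integrable lborel (\<lambda>s. norm (h s * heat t s))" using hint by (rule integrable_norm)
    show "integrable lborel (\<lambda>s. M * heat t s)" using heat_int[OF t] by (intro integrable_mult_right)
    show "norm (h s * heat t s) \<le> M * heat t s" for s
      using mult_right_mono[OF hM[of s] heat_nonneg[of t s]] heat_nonneg[of t s] by (simp add: abs_mult)
  qed
  also have "\<dots> = M" using heat_int1[OF t] by simp
  finally show ?thesis using e2 M_def by simp
qed

lemma abs_diff_bound: "\<bar>a\<bar> \<le> K1 \<Longrightarrow> \<bar>b\<bar> \<le> K2 \<Longrightarrow> \<bar>a - b\<bar> \<le> K1 + (K2::real)"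
  by arith

theorem corollary3p3:
  fixes F G :: "real \<Rightarrow> real"
  assumes "Bc F" and "Bc G"
  shows "(\<forall>t>0. fun_in_Ac (conv_heat F t) \<and> fun_in_Ac (conv_heat G t) \<and>
            anorm (\<lambda>x y. intg_fun (conv_heat F t) x y - intg_fun (conv_heat G t) x y)
              \<le> anorm (\<lambda>x y. intg_prim F x y - intg_prim G x y))
       \<and> (\<forall>(\<epsilon>::real) (u::real \<Rightarrow> real \<Rightarrow> real) (v::real \<Rightarrow> real \<Rightarrow> real).
            \<epsilon> > 0
            \<and> (\<forall>t>0. fun_in_Ac (\<lambda>x. u x t) \<and> fun_in_Ac (\<lambda>x. v x t))
            \<and> ((\<lambda>t. anorm (\<lambda>x y. intg_fun (\<lambda>\<xi>. u \<xi> t) x y - intg_prim F x y)) \<longlongrightarrow> 0) (at_right 0)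
            \<and> ((\<lambda>t. anorm (\<lambda>x y. intg_fun (\<lambda>\<xi>. v \<xi> t) x y - intg_prim G x y)) \<longlongrightarrow> 0) (at_right 0)
            \<and> anorm (\<lambda>x y. intg_prim F x y - intg_prim G x y) < \<epsilon>
            \<longrightarrow> (\<forall>\<^sub>F t in at_right 0.
                   anorm (\<lambda>x y. intg_fun (\<lambda>\<xi>. u \<xi> t) x y - intg_fun (\<lambda>\<xi>. v \<xi> t) x y) < 2 * \<epsilon>))"
proof (intro conjI allI impI)
  fix t :: real assume t: "t > 0"
  show "fun_in_Ac (conv_heat F t)" using conv_Ac[OF assms(1) t] by (auto simp: fun_in_Ac_def)
  show "fun_in_Ac (conv_heat G t)" using conv_Ac[OF assms(2) t] by (auto simp: fun_in_Ac_def)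
  show "anorm (\<lambda>x y. intg_fun (conv_heat F t) x y - intg_fun (conv_heat G t) x y)
              \<le> anorm (\<lambda>x y. intg_prim F x y - intg_prim G x y)"
    by (rule anorm_le) (rule partA[OF assms t])
next
  fix \<epsilon> :: real and u v :: "real \<Rightarrow> real \<Rightarrow> real"
  assume H: "\<epsilon> > 0
            \<and> (\<forall>t>0. fun_in_Ac (\<lambda>x. u x t) \<and> fun_in_Ac (\<lambda>x. v x t))
            \<and> ((\<lambda>t. anorm (\<lambda>x y. intg_fun (\<lambda>\<xi>. u \<xi> t) x y - intg_prim F x y)) \<longlongrightarrow> 0) (at_right 0)
            \<and> ((\<lambda>t. anorm (\<lambda>x y. intg_fun (\<lambda>\<xi>. v \<xi> t) x y - intg_prim G x y)) \<longlongrightarrow> 0) (at_right 0)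
            \<and> anorm (\<lambda>x y. intg_prim F x y - intg_prim G x y) < \<epsilon>"
  then have e: "\<epsilon> > 0" and Ac: "\<And>t. t > 0 \<Longrightarrow> fun_in_Ac (\<lambda>x. u x t) \<and> fun_in_Ac (\<lambda>x. v x t)"
    and lu: "((\<lambda>t. anorm (\<lambda>x y. intg_fun (\<lambda>\<xi>. u \<xi> t) x y - intg_prim F x y)) \<longlongrightarrow> 0) (at_right 0)"
    and lv: "((\<lambda>t. anorm (\<lambda>x y. intg_fun (\<lambda>\<xi>. v \<xi> t) x y - intg_prim G x y)) \<longlongrightarrow> 0) (at_right 0)"
    and fg: "anorm (\<lambda>x y. intg_prim F x y - intg_prim G x y) < \<epsilon>" by auto
  obtain K1 where K1: "\<And>x y. \<bar>intg_prim F x y\<bar> \<le> K1" using Bc_prim_bound[OF assms(1)] by blast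
  obtain K2 where K2: "\<And>x y. \<bar>intg_prim G x y\<bar> \<le> K2" using Bc_prim_bound[OF assms(2)] by blast
  have ev1: "\<forall>\<^sub>F t in at_right 0. anorm (\<lambda>x y. intg_fun (\<lambda>\<xi>. u \<xi> t) x y - intg_prim F x y) < \<epsilon>/2"
    by (rule order_tendstoD(2)[OF lu]) (use e in simp)
  have ev2: "\<forall>\<^sub>F t in at_right 0. anorm (\<lambda>x y. intg_fun (\<lambda>\<xi>. v \<xi> t) x y - intg_prim G x y) < \<epsilon>/2"
    by (rule order_tendstoD(2)[OF lv]) (use e in simp)
  show "\<forall>\<^sub>F t in at_right 0.
                   anorm (\<lambda>x y. intg_fun (\<lambda>\<xi>. u \<xi> t) x y - intg_fun (\<lambda>\<xi>. v \<xi> t) x y) < 2 * \<epsilon>"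
    using ev1 ev2 eventually_at_right_less[of "0::real"]
  proof eventually_elim
    case (elim t)
    then have t: "t > 0" by simp
    have Au: "fun_in_Ac (\<lambda>x. u x t)" and Av: "fun_in_Ac (\<lambda>x. v x t)" using Ac[OF t] by simp_all
    obtain Ku where Ku: "\<And>x y. x < y \<Longrightarrow> \<bar>intg_fun (\<lambda>x. u x t) x y\<bar> \<le> Ku"
      by (rule Ac_fun_bound[OF Au]) blast
    obtain Kv where Kv: "\<And>x y. x < y \<Longrightarrow> \<bar>intg_fun (\<lambda>x. v x t) x y\<bar> \<le> Kv"
      by (rule Ac_fun_bound[OF Av]) blast
    define a1 where "a1 = anorm (\<lambda>x y. intg_fun (\<lambda>\<xi>. u \<xi> t) x y - intg_prim F x y)"
    define a2 where "a2 = anorm (\<lambda>x y. intg_prim F x y - intg_prim G x y)"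
    define a3 where "a3 = anorm (\<lambda>x y. intg_fun (\<lambda>\<xi>. v \<xi> t) x y - intg_prim G x y)"
    have "anorm (\<lambda>x y. intg_fun (\<lambda>\<xi>. u \<xi> t) x y - intg_fun (\<lambda>\<xi>. v \<xi> t) x y) \<le> a1 + a2 + a3"
    proof (rule anorm_le)
      fix x y :: real assume xy: "x < y"
      have 1: "\<bar>intg_fun (\<lambda>\<xi>. u \<xi> t) x y - intg_prim F x y\<bar> \<le> a1"
        unfolding a1_def
      proof (rule anorm_ge[OF _ xy])
        fix x' y' :: real assume "x' < y'"
        then show "\<bar>intg_fun (\<lambda>\<xi>. u \<xi> t) x' y' - intg_prim F x' y'\<bar> \<le> Ku + K1" by (intro abs_diff_bound Ku K1)
      qed
      have 2: "\<bar>intg_prim F x y - intg_prim G x y\<bar> \<le> a2"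
        unfolding a2_def
      proof (rule anorm_ge[OF _ xy])
        fix x' y' :: real assume "x' < y'"
        then show "\<bar>intg_prim F x' y' - intg_prim G x' y'\<bar> \<le> K1 + K2" by (intro abs_diff_bound K1 K2)
      qed
      have 3: "\<bar>intg_fun (\<lambda>\<xi>. v \<xi> t) x y - intg_prim G x y\<bar> \<le> a3"
        unfolding a3_def
      proof (rule anorm_ge[OF _ xy])
        fix x' y' :: real assume "x' < y'"
        then show "\<bar>intg_fun (\<lambda>\<xi>. v \<xi> t) x' y' - intg_prim G x' y'\<bar> \<le> Kv + K2" by (intro abs_diff_bound Kv K2)
      qed
      show "\<bar>intg_fun (\<lambda>\<xi>. u \<xi> t) x y - intg_fun (\<lambda>\<xi>. v \<xi> t) x y\<bar> \<le> a1 + a2 + a3"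
        using 1 2 3 by linarith
    qed
    moreover have "a1 + a2 + a3 < 2 * \<epsilon>"
      using elim fg unfolding a1_def a2_def a3_def by linarith
    ultimately show ?case by linarith
  qed
qed

end
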